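(* Consider a slotted system with diversity. There are $N$ users, $N_{sub}\ge2$ sub-carriers and slots $1,\dots,T$. In each slot the BS chooses a user via $\pi_u$ and a sub-carrier via $\pi_s$; these algorithms may be randomized and history dependent. It then sends an update to that user on that sub-carrier. The adversary uses a blocking matrix $\sigma\in\{0,1\}^{N_{sub}\times T}$, where $\sigma_j(t)=0$ means sub-carrier $j$ is blocked in slot $t$. Feasibility means $\sum_{j,t}(1-\sigma_j(t))\le\alpha T$ and at most one sub-carrier is blocked per slot, where $0<\alpha<1$. Ages satisfy $a_i(1)=1$, $a_i(t+1)=1$ if user $i$ is chosen in slot $t$ on an unblocked sub-carrier, and $a_i(t+1)=a_i(t)+1$ otherwise. Let $\Delta^{\pi_u,\pi_s,\sigma}=\frac1T\sum_{t=1}^T\frac1N\sum_i\mathbb E[a_i(t)]$ and $\Delta^*(T)=\sup_\sigma\inf_{\pi_u,\pi_s}\Delta^{\pi_u,\pi_s,\sigma}$. Let "unif" denote choosing, independently in every slot, a uniformly random user and a uniformly random sub-carrier. Then $$\limsup_{T\to\infty}\frac{\sup_\sigma\Delta^{\mathrm{unif},\mathrm{unif},\sigma}}{\Delta^*(T)}\le\frac{2N_{sub}}{N_{sub}-1}.$$ *)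

theory Defs
  imports "HOL-Probability.Probability"
begin

text \<open>Users are 0..<N, sub-carriers are 0..<Nsub, slots are 1..T.
  A choice sequence c :: nat => nat * nat gives, in slot t, the chosen
  (user, sub-carrier) pair c t.\<close>

definition feasible_block ::
  "nat \<Rightarrow> nat \<Rightarrow> real \<Rightarrow> (nat \<Rightarrow> nat \<Rightarrow> nat) \<Rightarrow> bool" where
  "feasible_block Nsub T \<alpha> \<sigma> \<longleftrightarrow>
     (\<forall>j<Nsub. \<forall>t\<in>{1..T}. \<sigma> j t \<in> {0, 1}) \<and>
     real (\<Sum>j<Nsub. \<Sum>t=1..T. 1 - \<sigma> j t) \<le> \<alpha> * real T \<and>
     (\<forall>t\<in>{1..T}. card {j. j < Nsub \<and> \<sigma> j t = 0} \<le> 1)"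

text \<open>Age of user i at slot t: a_i(1) = 1, a_i(t+1) = 1 if user i is chosen in slot t on an
  unblocked sub-carrier, a_i(t+1) = a_i(t)+1 otherwise. (Index 0 is a dummy value.)\<close>

primrec age :: "(nat \<Rightarrow> nat \<Rightarrow> nat) \<Rightarrow> (nat \<Rightarrow> nat \<times> nat) \<Rightarrow> nat \<Rightarrow> nat \<Rightarrow> nat" where
  "age \<sigma> c i 0 = 1"
| "age \<sigma> c i (Suc t) =
     (if t = 0 then 1
      else if fst (c t) = i \<and> \<sigma> (snd (c t)) t = 1 then 1
      else age \<sigma> c i t + 1)"

definition avg_age ::
  "nat \<Rightarrow> nat \<Rightarrow> (nat \<Rightarrow> nat \<Rightarrow> nat) \<Rightarrow> (nat \<Rightarrow> nat \<times> nat) \<Rightarrow> real" where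
  "avg_age N T \<sigma> c =
     (1 / real T) * (\<Sum>t=1..T. (1 / real N) * (\<Sum>i<N. real (age \<sigma> c i t)))"

text \<open>A (possibly randomized, history dependent) scheduling policy pair (pi_u, pi_s),
  run against a fixed blocking matrix, induces a probability distribution over the
  sequence of (user, sub-carrier) choices; we represent a policy by that distribution.\<close>

definition valid_policy ::
  "nat \<Rightarrow> nat \<Rightarrow> nat \<Rightarrow> (nat \<Rightarrow> nat \<times> nat) pmf \<Rightarrow> bool" where
  "valid_policy N Nsub T p \<longleftrightarrow>
     (\<forall>c\<in>set_pmf p. \<forall>t\<in>{1..T}. fst (c t) < N \<and> snd (c t) < Nsub)"

definition Delta ::
  "nat \<Rightarrow> nat \<Rightarrow> (nat \<Rightarrow> nat \<Rightarrow> nat) \<Rightarrow> (nat \<Rightarrow> nat \<times> nat) pmf \<Rightarrow> real" where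
  "Delta N T \<sigma> p = measure_pmf.expectation p (avg_age N T \<sigma>)"

definition Delta_opt :: "nat \<Rightarrow> nat \<Rightarrow> real \<Rightarrow> nat \<Rightarrow> real" where
  "Delta_opt N Nsub \<alpha> T =
     (SUP \<sigma>\<in>{\<sigma>. feasible_block Nsub T \<alpha> \<sigma>}.
        INF p\<in>{p. valid_policy N Nsub T p}. Delta N T \<sigma> p)"

definition unif_policy :: "nat \<Rightarrow> nat \<Rightarrow> nat \<Rightarrow> (nat \<Rightarrow> nat \<times> nat) pmf" where
  "unif_policy N Nsub T =
     Pi_pmf {1..T} (0, 0) (\<lambda>_. pmf_of_set ({..<N} \<times> {..<Nsub}))"

definition Delta_unif_worst :: "nat \<Rightarrow> nat \<Rightarrow> real \<Rightarrow> nat \<Rightarrow> real" where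
  "Delta_unif_worst N Nsub \<alpha> T =
     (SUP \<sigma>\<in>{\<sigma>. feasible_block Nsub T \<alpha> \<sigma>}. Delta N T \<sigma> (unif_policy N Nsub T))"

end

theory Submission
  imports Defs
begin


lemma age_ge1: "1 \<le> age \<sigma> c i t"
  by (cases t) auto

lemma age_reset:
  "t \<ge> 1 \<Longrightarrow> age \<sigma> c i t \<le> t \<and> (age \<sigma> c i t < t \<longrightarrow> fst (c (t - age \<sigma> c i t)) = i)"
proof (induction t)
  case 0 then show ?case by simp
next
  case (Suc t)
  show ?case
  proof (cases "t = 0")
    case True then show ?thesis by simp
  next
    case tnz: False
    then have IH: "age \<sigma> c i t \<le> t \<and> (age \<sigma> c i t < t \<longrightarrow> fst (c (t - age \<sigma> c i t)) = i)"
      using Suc.IH by simp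
    show ?thesis
    proof (cases "fst (c t) = i \<and> \<sigma> (snd (c t)) t = 1")
      case True then show ?thesis using tnz by simp
    next
      case nr: False
      then have e: "age \<sigma> c i (Suc t) = Suc (age \<sigma> c i t)" using tnz nr by auto
      have "Suc t - Suc (age \<sigma> c i t) = t - age \<sigma> c i t" by simp
      then show ?thesis unfolding e using IH by simp
    qed
  qed
qed

lemma sum_lb:
  fixes f :: "'a \<Rightarrow> nat"
  shows "finite A \<Longrightarrow> card A = n \<Longrightarrow> (\<forall>a\<in>A. 1 \<le> f a) \<Longrightarrow> inj_on f {a\<in>A. f a < n}
    \<Longrightarrow> n * (n + 1) \<le> 2 * sum f A"
proof (induction n arbitrary: A)
  case 0 then show ?case by simp
next
  case (Suc n)
  have "\<exists>a\<in>A. f a \<ge> Suc n"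
  proof (rule ccontr)
    assume nt: "\<not> ?thesis"
    have "A \<subseteq> {a\<in>A. f a < Suc n}" using nt by auto
    then have "inj_on f A" using Suc.prems(4) by (rule inj_on_subset[rotated])
    moreover have "f ` A \<subseteq> {1..<Suc n}" using Suc.prems(3) nt by fastforce
    ultimately have "card A \<le> card {1..<Suc n}"
      by (rule card_inj_on_le) simp
    then show False using Suc.prems(2) by simp
  qed
  then obtain a where a: "a \<in> A" "f a \<ge> Suc n" by blast
  have "n * (n + 1) \<le> 2 * sum f (A - {a})"
  proof (rule Suc.IH)
    show "finite (A - {a})" using Suc.prems(1) by simp
    show "card (A - {a}) = n" using Suc.prems(1,2) a(1) by simp
    show "\<forall>x\<in>A - {a}. 1 \<le> f x" using Suc.prems(3) by blast
    have "{x \<in> A - {a}. f x < n} \<subseteq> {x\<in>A. f x < Suc n}" by auto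
    then show "inj_on f {x \<in> A - {a}. f x < n}" using Suc.prems(4) by (rule inj_on_subset[rotated])
  qed
  moreover have "sum f A = f a + sum f (A - {a})"
    using a Suc.prems(1) by (simp add: sum.remove)
  ultimately show ?case using a by simp
qed

lemma sum_ages:
  assumes "N \<le> t" "1 \<le> t"
  shows "N * (N + 1) \<le> 2 * (\<Sum>i<N. age \<sigma> c i t)"
proof (rule sum_lb)
  show "inj_on (\<lambda>i. age \<sigma> c i t) {a \<in> {..<N}. age \<sigma> c a t < N}"
  proof (rule inj_onI)
    fix x y assume "x \<in> {a \<in> {..<N}. age \<sigma> c a t < N}" "y \<in> {a \<in> {..<N}. age \<sigma> c a t < N}"
      "age \<sigma> c x t = age \<sigma> c y t"
    then have "age \<sigma> c x t < t" "age \<sigma> c y t < t" "x < N" "y < N" "age \<sigma> c x t = age \<sigma> c y t"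
      using assms(1) by auto
    then show "x = y" using age_reset[OF assms(2), of \<sigma> c x] age_reset[OF assms(2), of \<sigma> c y]
      by metis
  qed
qed (simp_all add: age_ge1[simplified])


lemma avg_lb:
  assumes "1 \<le> N" "N \<le> T"
  shows "real (T + 1 - N) * (real N + 1) / (2 * real T) \<le> avg_age N T \<sigma> c"
proof -
  let ?g = "\<lambda>t. (1 / real N) * (\<Sum>i<N. real (age \<sigma> c i t))"
  have g: "(real N + 1) / 2 \<le> ?g t" if "t \<in> {N..T}" for t
  proof -
    have "N * (N + 1) \<le> 2 * (\<Sum>i<N. age \<sigma> c i t)"
      using sum_ages[of N t] that assms by auto
    then have "real (N * (N + 1)) \<le> real (2 * (\<Sum>i<N. age \<sigma> c i t))"
      by (simp only: of_nat_le_iff)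
    then have "real N * (real N + 1) / 2 \<le> (\<Sum>i<N. real (age \<sigma> c i t))"
      by (simp add: of_nat_sum algebra_simps)
    then have "(1 / real N) * (real N * (real N + 1) / 2) \<le> ?g t"
      by (rule mult_left_mono) simp
    moreover have "(1 / real N) * (real N * (real N + 1) / 2) = (real N + 1) / 2"
      using assms by simp
    ultimately show ?thesis by simp
  qed
  have nn: "0 \<le> ?g t" for t by (simp add: sum_nonneg)
  have "real (card {N..T}) * ((real N + 1) / 2) \<le> (\<Sum>t\<in>{N..T}. ?g t)"
    using sum_bounded_below[of "{N..T}" "(real N + 1) / 2" ?g] g by simp
  also have "\<dots> \<le> (\<Sum>t\<in>{1..T}. ?g t)"
    by (rule sum_mono2) (use assms nn in auto)
  finally have "real (T + 1 - N) * ((real N + 1) / 2) \<le> (\<Sum>t\<in>{1..T}. ?g t)" by simp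
  then have "(1 / real T) * (real (T + 1 - N) * ((real N + 1) / 2)) \<le> (1 / real T) * (\<Sum>t\<in>{1..T}. ?g t)"
    by (rule mult_left_mono) simp
  moreover have "(1 / real T) * (real (T + 1 - N) * ((real N + 1) / 2)) = real (T + 1 - N) * (real N + 1) / (2 * real T)"
    by simp
  ultimately show ?thesis unfolding avg_age_def by simp
qed

lemma avg_ub:
  fixes h :: "nat \<Rightarrow> nat \<Rightarrow> real"
  assumes "\<And>t i. t \<in> {1..T} \<Longrightarrow> i < N \<Longrightarrow> h t i \<le> K" "0 \<le> K"
  shows "(1 / real T) * (\<Sum>t=1..T. (1 / real N) * (\<Sum>i<N. h t i)) \<le> K"
proof -
  have "(1 / real N) * (\<Sum>i<N. h t i) \<le> K" if "t \<in> {1..T}" for t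
  proof -
    have "(\<Sum>i<N. h t i) \<le> real N * K"
      using sum_bounded_above[of "{..<N}" "h t" K] assms that by simp
    then have "(1 / real N) * (\<Sum>i<N. h t i) \<le> (1 / real N) * (real N * K)"
      by (rule mult_left_mono) simp
    also have "\<dots> \<le> K" using assms(2) by (cases "N = 0") simp_all
    finally show ?thesis .
  qed
  then have "(\<Sum>t=1..T. (1 / real N) * (\<Sum>i<N. h t i)) \<le> real (card {1..T}) * K"
    by (intro sum_bounded_above) simp
  then have "(1 / real T) * (\<Sum>t=1..T. (1 / real N) * (\<Sum>i<N. h t i)) \<le> (1 / real T) * (real T * K)"
    by (intro mult_left_mono) simp_all
  also have "\<dots> \<le> K" using assms(2) by (cases "T = 0") simp_all
  finally show ?thesis .
qed

definition noreset :: "(nat \<Rightarrow> nat \<Rightarrow> nat) \<Rightarrow> nat \<Rightarrow> nat \<Rightarrow> nat \<Rightarrow> (nat \<Rightarrow> nat \<times> nat) set" where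
  "noreset \<sigma> i m t = {c. \<forall>s\<in>{m..<t}. \<not> (fst (c s) = i \<and> \<sigma> (snd (c s)) s = 1)}"

lemma age_formula:
  "1 \<le> t \<Longrightarrow> real (age \<sigma> c i t) = 1 + (\<Sum>m\<in>{1..<t}. indicator (noreset \<sigma> i m t) c)"
proof (induction t)
  case 0 then show ?case by simp
next
  case (Suc t)
  show ?case
  proof (cases "t = 0")
    case True then show ?thesis by simp
  next
    case tnz: False
    then have IH: "real (age \<sigma> c i t) = 1 + (\<Sum>m\<in>{1..<t}. indicator (noreset \<sigma> i m t) c)"
      using Suc.IH by simp
    have split: "indicator (noreset \<sigma> i m (Suc t)) c =
        (indicator (noreset \<sigma> i m t) c :: real) * (if fst (c t) = i \<and> \<sigma> (snd (c t)) t = 1 then 0 else 1)"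
      if "m \<le> t" for m
      using that by (auto simp: noreset_def indicator_def atLeastLessThanSuc)
    have sumeq: "(\<Sum>m\<in>{1..<Suc t}. indicator (noreset \<sigma> i m (Suc t)) c) =
       (\<Sum>m\<in>{1..<t}. indicator (noreset \<sigma> i m (Suc t)) c) + (indicator (noreset \<sigma> i t (Suc t)) c :: real)"
      using tnz by simp
    show ?thesis
    proof (cases "fst (c t) = i \<and> \<sigma> (snd (c t)) t = 1")
      case True
      have z1: "(\<Sum>m\<in>{1..<t}. indicator (noreset \<sigma> i m (Suc t)) c) = (0::real)"
        by (rule sum.neutral) (use True in \<open>auto simp: split\<close>)
      have z2: "(indicator (noreset \<sigma> i t (Suc t)) c :: real) = 0"
        using True by (auto simp: noreset_def indicator_def)
      show ?thesis using tnz True unfolding sumeq z1 z2 by simp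
    next
      case nr: False
      then have e: "age \<sigma> c i (Suc t) = Suc (age \<sigma> c i t)" using tnz nr by auto
      have "(\<Sum>m\<in>{1..<t}. indicator (noreset \<sigma> i m (Suc t)) c) =
            (\<Sum>m\<in>{1..<t}. indicator (noreset \<sigma> i m t) c :: real)"
        by (rule sum.cong) (use nr in \<open>auto simp: split\<close>)
      moreover have "(indicator (noreset \<sigma> i t (Suc t)) c :: real) = 1"
        using nr by (auto simp: noreset_def indicator_def)
      ultimately show ?thesis unfolding e sumeq using IH by simp
    qed
  qed
qed


lemma geo:
  fixes r :: real
  assumes "1 \<le> t"
  shows "1 + (\<Sum>m\<in>{1..<t}. r ^ (t - m)) = (\<Sum>j<t. r ^ j)"
proof -
  have "(\<Sum>m\<in>{1..<t}. r ^ (t - m)) = (\<Sum>j\<in>{1..<t}. r ^ j)"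
    by (rule sum.reindex_bij_witness[of _ "\<lambda>j. t - j" "\<lambda>m. t - m"]) auto
  moreover have "(\<Sum>j<t. r ^ j) = 1 + (\<Sum>j\<in>{1..<t}. r ^ j)"
    using assms by (metis One_nat_def Suc_le_D power_0 sum.atLeast0_lessThan_Suc_shift sum.atLeast_Suc_lessThan_Suc_shift lessThan_atLeast0)
  ultimately show ?thesis by simp
qed

lemma geo_bound:
  fixes r :: real
  assumes "0 \<le> r" "r < 1" "1 \<le> t"
  shows "1 + (\<Sum>m\<in>{1..<t}. r ^ (t - m)) \<le> 1 / (1 - r)"
proof -
  have "(\<Sum>j<t. r ^ j) = (1 - r ^ t) / (1 - r)" using sum_gp_strict[of r t] assms by simp
  also have "\<dots> \<le> 1 / (1 - r)" using assms by (simp add: divide_right_mono)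
  finally show ?thesis using geo[OF assms(3)] by simp
qed

lemma card_unblocked:
  assumes "feasible_block Nsub T \<alpha> \<sigma>" "s \<in> {1..T}"
  shows "Nsub - 1 \<le> card {j. j < Nsub \<and> \<sigma> j s = 1}"
proof -
  have z: "card {j. j < Nsub \<and> \<sigma> j s = 0} \<le> 1" using assms unfolding feasible_block_def by blast
  have v: "\<forall>j<Nsub. \<sigma> j s \<in> {0, 1}" using assms unfolding feasible_block_def by blast
  have "{..<Nsub} = {j. j < Nsub \<and> \<sigma> j s = 1} \<union> {j. j < Nsub \<and> \<sigma> j s = 0}"
    using v by auto
  then have "Nsub \<le> card {j. j < Nsub \<and> \<sigma> j s = 1} + card {j. j < Nsub \<and> \<sigma> j s = 0}"
    by (metis card_Un_le card_lessThan)
  then show ?thesis using z by linarith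
qed

lemma prob_reset:
  assumes "feasible_block Nsub T \<alpha> \<sigma>" "s \<in> {1..T}" "i < N" "2 \<le> Nsub"
  shows "(real Nsub - 1) / (real N * real Nsub) \<le>
     measure (pmf_of_set ({..<N} \<times> {..<Nsub})) {x. fst x = i \<and> \<sigma> (snd x) s = 1}"
proof -
  have "(i, 0) \<in> {..<N} \<times> {..<Nsub}" using assms by auto
  then have ne: "{..<N} \<times> {..<Nsub} \<noteq> {}" by blast
  have eq: "({..<N} \<times> {..<Nsub}) \<inter> {x. fst x = i \<and> \<sigma> (snd x) s = 1} = {i} \<times> {j. j < Nsub \<and> \<sigma> j s = 1}"
    using assms by auto
  let ?A = "{x. fst x = i \<and> \<sigma> (snd x) s = 1}"
  have "real Nsub - 1 \<le> real (card {j. j < Nsub \<and> \<sigma> j s = 1})"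
    using card_unblocked[OF assms(1,2)] assms(4) by linarith
  also have "card {j. j < Nsub \<and> \<sigma> j s = 1} = card (({..<N} \<times> {..<Nsub}) \<inter> ?A)"
    unfolding eq by (simp add: card_cartesian_product)
  finally have c: "real Nsub - 1 \<le> real (card (({..<N} \<times> {..<Nsub}) \<inter> ?A))" .
  have m: "measure (pmf_of_set ({..<N} \<times> {..<Nsub})) ?A = real (card (({..<N} \<times> {..<Nsub}) \<inter> ?A)) / (real N * real Nsub)"
    using measure_pmf_of_set[OF ne, of ?A] by (simp add: card_cartesian_product)
  show ?thesis unfolding m using c assms by (simp add: divide_right_mono)
qed

lemma prob_noreset_slot:
  assumes "feasible_block Nsub T \<alpha> \<sigma>" "s \<in> {1..T}" "i < N" "2 \<le> Nsub"
  shows "measure (pmf_of_set ({..<N} \<times> {..<Nsub})) {x. \<not> (fst x = i \<and> \<sigma> (snd x) s = 1)}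
      \<le> 1 - (real Nsub - 1) / (real N * real Nsub)"
proof -
  have "{x. \<not> (fst x = i \<and> \<sigma> (snd x) s = 1)} = UNIV - {x. fst x = i \<and> \<sigma> (snd x) s = 1}" by auto
  moreover have "measure (pmf_of_set ({..<N} \<times> {..<Nsub})) (UNIV - {x. fst x = i \<and> \<sigma> (snd x) s = 1})
     = 1 - measure (pmf_of_set ({..<N} \<times> {..<Nsub})) {x. fst x = i \<and> \<sigma> (snd x) s = 1}"
    using measure_pmf.prob_compl[of "{x. fst x = i \<and> \<sigma> (snd x) s = 1}" "pmf_of_set ({..<N} \<times> {..<Nsub})"]
    by simp
  ultimately show ?thesis using prob_reset[OF assms] by simp
qed

lemma prob_noreset:
  assumes "feasible_block Nsub T \<alpha> \<sigma>" "i < N" "2 \<le> Nsub" "1 \<le> m" "t \<le> T + 1"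
  shows "measure (unif_policy N Nsub T) (noreset \<sigma> i m t)
      \<le> (1 - (real Nsub - 1) / (real N * real Nsub)) ^ (t - m)"
proof -
  let ?S = "{..<N} \<times> {..<Nsub}"
  let ?r = "1 - (real Nsub - 1) / (real N * real Nsub)"
  define B where "B s = (if s \<in> {m..<t} then {x. \<not> (fst x = i \<and> \<sigma> (snd x) s = 1)} else UNIV)" for s
  have eq: "noreset \<sigma> i m t = Pi {1..T} B"
    using assms(4,5) by (auto simp: noreset_def B_def Pi_def)
  have "measure (unif_policy N Nsub T) (noreset \<sigma> i m t) =
        (\<Prod>s\<in>{1..T}. measure (pmf_of_set ?S) (B s))"
    unfolding eq unif_policy_def by (rule measure_Pi_pmf_Pi) simp
  also have "\<dots> \<le> (\<Prod>s\<in>{1..T}. (if s \<in> {m..<t} then ?r else 1))"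
  proof (rule prod_mono)
    fix s assume s: "s \<in> {1..T}"
    show "0 \<le> measure (pmf_of_set ?S) (B s) \<and>
         measure (pmf_of_set ?S) (B s) \<le> (if s \<in> {m..<t} then ?r else 1)"
      using prob_noreset_slot[OF assms(1) s assms(2,3)] by (simp add: B_def)
  qed
  also have "\<dots> = ?r ^ (t - m)"
  proof -
    have "{1..T} \<inter> {s. s \<in> {m..<t}} = {m..<t}" using assms(4,5) by auto
    then show ?thesis by (simp add: prod.If_cases)
  qed
  finally show ?thesis .
qed

lemma finite_unif:
  assumes "0 < N" "0 < Nsub"
  shows "finite (set_pmf (unif_policy N Nsub T))"
proof -
  let ?S = "{..<N} \<times> {..<Nsub}"
  have "(0,0) \<in> ?S" using assms by simp
  then have ne: "?S \<noteq> {}" by blast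
  have fS: "finite ?S" by simp
  have e: "set_pmf (pmf_of_set ?S) = ?S" by (rule set_pmf_of_set[OF ne fS])
  have "finite (PiE_dflt {1..T} (0, 0) (set_pmf \<circ> (\<lambda>_. pmf_of_set ?S)))"
  proof (rule finite_PiE_dflt)
    show "finite {1..T}" by simp
    fix x show "finite ((set_pmf \<circ> (\<lambda>_. pmf_of_set ?S)) x)" unfolding comp_def e by (rule fS)
  qed
  moreover have "set_pmf (unif_policy N Nsub T) = PiE_dflt {1..T} (0, 0) (set_pmf \<circ> (\<lambda>_. pmf_of_set ?S))"
    unfolding unif_policy_def by (rule set_Pi_pmf) simp
  ultimately show ?thesis by simp
qed

lemma exp_age:
  assumes "feasible_block Nsub T \<alpha> \<sigma>" "i < N" "2 \<le> Nsub" "t \<in> {1..T}"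
  shows "measure_pmf.expectation (unif_policy N Nsub T) (\<lambda>c. real (age \<sigma> c i t))
     \<le> real N * real Nsub / (real Nsub - 1)"
proof -
  let ?p = "unif_policy N Nsub T"
  let ?r = "1 - (real Nsub - 1) / (real N * real Nsub)"
  have int: "integrable (measure_pmf ?p) f" for f :: "_ \<Rightarrow> real"
    by (rule integrable_measure_pmf_finite[OF finite_unif]) (use assms in auto)
  have "measure_pmf.expectation ?p (\<lambda>c. real (age \<sigma> c i t)) =
        measure_pmf.expectation ?p (\<lambda>c. 1 + (\<Sum>m\<in>{1..<t}. indicator (noreset \<sigma> i m t) c))"
  proof (rule Bochner_Integration.integral_cong[OF refl])
    fix c :: "nat \<Rightarrow> nat \<times> nat"
    have "1 \<le> t" using assms(4) by simp
    then show "real (age \<sigma> c i t) = 1 + (\<Sum>m\<in>{1..<t}. indicator (noreset \<sigma> i m t) c)"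
      by (rule age_formula)
  qed
  also have "\<dots> = 1 + (\<Sum>m\<in>{1..<t}. measure ?p (noreset \<sigma> i m t))"
  proof -
    have a: "measure_pmf.expectation ?p (\<lambda>c. 1 + (\<Sum>m\<in>{1..<t}. indicator (noreset \<sigma> i m t) c :: real)) =
      measure_pmf.expectation ?p (\<lambda>_. 1::real) +
      measure_pmf.expectation ?p (\<lambda>c. (\<Sum>m\<in>{1..<t}. indicator (noreset \<sigma> i m t) c :: real))"
      by (rule Bochner_Integration.integral_add) (rule int)+
    have b: "measure_pmf.expectation ?p (\<lambda>c. (\<Sum>m\<in>{1..<t}. indicator (noreset \<sigma> i m t) c :: real)) =
      (\<Sum>m\<in>{1..<t}. measure_pmf.expectation ?p (indicator (noreset \<sigma> i m t) :: _ \<Rightarrow> real))"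
      by (intro Bochner_Integration.integral_sum int)
    have c: "(\<Sum>m\<in>{1..<t}. measure_pmf.expectation ?p (indicator (noreset \<sigma> i m t) :: _ \<Rightarrow> real))
      = (\<Sum>m\<in>{1..<t}. measure ?p (noreset \<sigma> i m t))"
      by (rule sum.cong[OF refl]) simp
    have d: "measure_pmf.expectation ?p (\<lambda>_. 1::real) = 1" by simp
    show ?thesis by (simp only: a b c d)
  qed
  also have "\<dots> \<le> 1 + (\<Sum>m\<in>{1..<t}. ?r ^ (t - m))"
  proof (rule add_left_mono, rule sum_mono)
    fix m assume "m \<in> {1..<t}"
    then have "1 \<le> m" "t \<le> T + 1" using assms(4) by auto
    then show "measure ?p (noreset \<sigma> i m t) \<le> ?r ^ (t - m)"
      by (rule prob_noreset[OF assms(1,2,3)])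
  qed
  also have "\<dots> \<le> 1 / (1 - ?r)"
  proof (rule geo_bound)
    have N: "1 \<le> real N" using assms(2) by simp
    have Ns: "2 \<le> real Nsub" using assms(3) by simp
    have "(real Nsub - 1) / (real N * real Nsub) \<le> 1"
    proof -
      have "1 * real Nsub \<le> real N * real Nsub" by (rule mult_right_mono) (use N in simp_all)
      then have "real Nsub - 1 \<le> real N * real Nsub" by linarith
      then show ?thesis using N Ns by (simp add: divide_le_eq)
    qed
    then show "0 \<le> ?r" by simp
    have "0 < (real Nsub - 1) / (real N * real Nsub)" using N Ns by simp
    then show "?r < 1" by simp
  qed (use assms in auto)
  also have "\<dots> = real N * real Nsub / (real Nsub - 1)" by simp
  finally show ?thesis .
qed


lemma avg_le_T: "avg_age N T \<sigma> c \<le> real T"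
  unfolding avg_age_def
proof (rule avg_ub)
  fix t i assume "t \<in> {1..T}" "i < N"
  then show "real (age \<sigma> c i t) \<le> real T" using age_reset[of t \<sigma> c i] by auto
qed simp

lemma avg_ge0: "0 \<le> avg_age N T \<sigma> c"
  unfolding avg_age_def by (intro mult_nonneg_nonneg sum_nonneg) auto

lemma integrable_avg: "integrable (measure_pmf p) (avg_age N T \<sigma>)"
  by (rule measure_pmf.integrable_const_bound[where B="real T"])
     (auto simp: avg_le_T avg_ge0 abs_of_nonneg)

lemma Delta_bounds:
  assumes "1 \<le> N" "N \<le> T"
  shows "real (T + 1 - N) * (real N + 1) / (2 * real T) \<le> Delta N T \<sigma> p"
    and "Delta N T \<sigma> p \<le> real T"
proof -
  show "real (T + 1 - N) * (real N + 1) / (2 * real T) \<le> Delta N T \<sigma> p"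
  proof -
    have "measure_pmf.expectation p (\<lambda>_. real (T + 1 - N) * (real N + 1) / (2 * real T))
      \<le> measure_pmf.expectation p (avg_age N T \<sigma>)"
      by (rule integral_mono) (use avg_lb[OF assms] in \<open>auto intro: integrable_avg\<close>)
    then show ?thesis unfolding Delta_def by simp
  qed
  show "Delta N T \<sigma> p \<le> real T"
  proof -
    have "measure_pmf.expectation p (avg_age N T \<sigma>) \<le> measure_pmf.expectation p (\<lambda>_. real T)"
      by (rule integral_mono) (auto intro: integrable_avg avg_le_T)
    then show ?thesis unfolding Delta_def by simp
  qed
qed

lemma Delta_unif_le:
  assumes "feasible_block Nsub T \<alpha> \<sigma>" "1 \<le> N" "2 \<le> Nsub"
  shows "Delta N T \<sigma> (unif_policy N Nsub T) \<le> real N * real Nsub / (real Nsub - 1)"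
proof -
  let ?p = "unif_policy N Nsub T"
  have int: "integrable (measure_pmf ?p) f" for f :: "_ \<Rightarrow> real"
    by (rule integrable_measure_pmf_finite[OF finite_unif]) (use assms in auto)
  have "Delta N T \<sigma> ?p = (1 / real T) * (\<Sum>t=1..T. (1 / real N) *
      (\<Sum>i<N. measure_pmf.expectation ?p (\<lambda>c. real (age \<sigma> c i t))))"
    unfolding Delta_def avg_age_def
    by (simp add: int Bochner_Integration.integral_sum)
  also have "\<dots> \<le> real N * real Nsub / (real Nsub - 1)"
    by (rule avg_ub) (use assms exp_age in auto)
  finally show ?thesis .
qed

theorem theorem11:
  fixes N Nsub :: nat and \<alpha> :: real
  assumes "N \<ge> 1" and "Nsub \<ge> 2" and "0 < \<alpha>" and "\<alpha> < 1"
  shows "limsup (\<lambda>T. ereal (Delta_unif_worst N Nsub \<alpha> T / Delta_opt N Nsub \<alpha> T))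
           \<le> ereal (2 * real Nsub / (real Nsub - 1))"
proof (rule Limsup_bounded, unfold eventually_sequentially, intro exI allI impI)
  fix T assume T: "N * N \<le> T"
  have NT: "N \<le> T" using T assms(1) by (metis le_trans mult_le_mono1 nat_mult_1)
  let ?U = "real N * real Nsub / (real Nsub - 1)"
  let ?L = "real (T + 1 - N) * (real N + 1) / (2 * real T)"
  let ?F = "{\<sigma>. feasible_block Nsub T \<alpha> \<sigma>}"
  let ?V = "{p. valid_policy N Nsub T p}"
  define \<sigma>0 :: "nat \<Rightarrow> nat \<Rightarrow> nat" where "\<sigma>0 = (\<lambda>_ _. 1)"
  have s0: "\<sigma>0 \<in> ?F" using assms by (simp add: feasible_block_def \<sigma>0_def)
  define p0 :: "(nat \<Rightarrow> nat \<times> nat) pmf" where "p0 = return_pmf (\<lambda>_. (0, 0))"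
  have p0: "p0 \<in> ?V" using assms by (simp add: valid_policy_def p0_def)
  have W: "Delta_unif_worst N Nsub \<alpha> T \<le> ?U"
    unfolding Delta_unif_worst_def
    apply (rule cSUP_least)
    using s0 apply blast
    using Delta_unif_le assms(1,2) by blast
  have bb: "bdd_below ((\<lambda>p. Delta N T \<sigma> p) ` ?V)" for \<sigma>
    by (rule bdd_belowI[of _ ?L]) (use Delta_bounds(1)[OF assms(1) NT] in blast)
  have O: "?L \<le> Delta_opt N Nsub \<alpha> T"
    unfolding Delta_opt_def
  proof (rule cSUP_upper2[OF _ s0])
    show "bdd_above ((\<lambda>\<sigma>. INF p\<in>?V. Delta N T \<sigma> p) ` ?F)"
    proof (rule bdd_aboveI[of _ "real T"])
      fix x assume "x \<in> (\<lambda>\<sigma>. INF p\<in>?V. Delta N T \<sigma> p) ` ?F"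
      then obtain \<sigma> where x: "x = (INF p\<in>?V. Delta N T \<sigma> p)" by blast
      have "x \<le> Delta N T \<sigma> p0" unfolding x by (rule cINF_lower[OF bb p0])
      then show "x \<le> real T" using Delta_bounds(2)[OF assms(1) NT] by (meson order_trans)
    qed
    show "?L \<le> (INF p\<in>?V. Delta N T \<sigma>0 p)"
      apply (rule cINF_greatest)
      using p0 apply blast
      using Delta_bounds(1)[OF assms(1) NT] by blast
  qed
  have T1: "1 \<le> T" using NT assms(1) by simp
  have "real N * real N \<le> real T" using T by (metis of_nat_le_iff of_nat_mult)
  then have LN: "real N / 2 \<le> ?L"
  proof -
    have e: "real (T + 1 - N) = real T + 1 - real N" using NT by (simp add: of_nat_diff)
    have x: "(real T + 1 - real N) * (real N + 1) = real N * real T + (real T - real N * real N) + 1"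
      by (simp add: algebra_simps)
    have k: "real N / 2 * (2 * real T) \<le> (real T + 1 - real N) * (real N + 1)"
      unfolding x using \<open>real N * real N \<le> real T\<close> by simp
    have "0 < 2 * real T" using T1 by simp
    then show ?thesis unfolding e using k by (simp only: pos_le_divide_eq)
  qed
  have Npos: "0 < real N / 2" using assms by simp
  have Upos: "0 \<le> ?U" using assms by simp
  have "Delta_unif_worst N Nsub \<alpha> T / Delta_opt N Nsub \<alpha> T \<le> ?U / Delta_opt N Nsub \<alpha> T"
    by (rule divide_right_mono[OF W]) (use O LN Npos in linarith)
  also have "\<dots> \<le> ?U / (real N / 2)"
    apply (rule divide_left_mono)
    using O LN apply linarith
    using Upos apply linarith
    using O LN Npos by (intro mult_pos_pos) linarith+
  also have "\<dots> = 2 * real Nsub / (real Nsub - 1)"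
  proof -
    have "real N \<noteq> 0" using assms by simp
    then show ?thesis by (simp add: divide_simps)
  qed
  finally show "ereal (Delta_unif_worst N Nsub \<alpha> T / Delta_opt N Nsub \<alpha> T)
           \<le> ereal (2 * real Nsub / (real Nsub - 1))" by simp
qed

end
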